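(* Let $m,n$ be nonnegative integers with $0\leqslant m\leqslant n$, let $\varepsilon\in\{+1,-1\}$, and let $z\in\mathbb{C}\setminus(-\infty,1]$. Then \begin{align*} \frac{\mathrm{d}^{m}}{\mathrm{d}z^{m}}\bigl[P_{n}(z)\ln(z+\varepsilon)\bigr] &= \frac{(2m)!}{2^{m}m!}C_{n-m}^{(m+1/2)}(z)\ln(z+\varepsilon)\\ &\quad -(-\varepsilon)^{n}(-1)^{m}(z+\varepsilon)^{-m}\sum_{k=0}^{m-1}\varepsilon^{k}\frac{(k+n)!\,(m-k-1)!}{k!\,(n-k)!}\left(\frac{z+\varepsilon}{2}\right)^{k}\\ &\quad +\frac{(-\varepsilon)^{n+m}}{2^{m}}\sum_{k=0}^{n-m}(-\varepsilon)^{k}\frac{(k+n+m)!}{k!\,(k+m)!\,(n-m-k)!}\,[\psi(k+m+1)-\psi(k+1)]\left(\frac{z+\varepsilon}{2}\right)^{k}. \end{align*}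
   Context: $P_n(z)$ denotes the Legendre polynomial of degree $n$. $C_{j}^{(\alpha)}(z)$ denotes the Gegenbauer (ultraspherical) polynomial of degree $j$ and parameter $\alpha$. $\psi(\zeta)=\Gamma'(\zeta)/\Gamma(\zeta)$ is the digamma function. The complex plane is cut along the real axis from $-\infty$ to $+1$; for $z\in\mathbb{C}\setminus(-\infty,1]$, $\ln(z\pm1)$ denotes the principal branch of the logarithm. The case $\varepsilon=+1$ concerns $\ln(z+1)$ and the case $\varepsilon=-1$ concerns $\ln(z-1)$. Empty sums are zero. *)

theory Defs
  imports "HOL-Analysis.Analysis"
begin

definition legendreP :: "nat \<Rightarrow> complex \<Rightarrow> complex" where
  "legendreP n z = (\<Sum>k\<le>n div 2. (-1)^k * of_nat (n choose k) * of_nat ((2*n - 2*k) choose n)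
                        * z ^ (n - 2*k)) / 2 ^ n"

definition gegenbauerC :: "nat \<Rightarrow> complex \<Rightarrow> complex \<Rightarrow> complex" where
  "gegenbauerC j a z = (\<Sum>k\<le>j div 2. (-1)^k * pochhammer a (j - k)
                        / (fact k * fact (j - 2*k)) * (2*z) ^ (j - 2*k))"

end

theory Submission
  imports Defs
begin
definition ff :: "nat \<Rightarrow> nat \<Rightarrow> complex" where "ff k m = (\<Prod>i<m. of_nat (k - i))"

lemma ff_0[simp]: "ff k 0 = 1" by (simp add: ff_def)
lemma ff_Suc: "ff k (Suc m) = ff k m * of_nat (k - m)" by (simp add: ff_def)
lemma ff_zero: "k < m \<Longrightarrow> ff k m = 0"
  unfolding ff_def by (rule prod_zero) (auto intro: bexI[of _ k])
lemma ff_fact: "m \<le> k \<Longrightarrow> ff k m = fact k / fact (k - m)"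
proof (induction m)
  case (Suc m)
  then have "fact (k - m) = of_nat (k - m) * (fact (k - Suc m) :: complex)"
    by (metis Suc_diff_Suc fact_Suc less_eq_Suc_le of_nat_fact of_nat_mult)
  with Suc show ?case by (simp add: ff_Suc field_simps)
qed simp

lemma deriv_term:
  "((\<lambda>z. c * ff e m * (z+a)^(e - m)) has_field_derivative c * ff e (Suc m) * (z+a)^(e - Suc m)) (at z)"
proof -
  have "((\<lambda>z. c * ff e m * (z+a)^(e - m)) has_field_derivative c * ff e m * (of_nat (e-m) * (z+a)^(e - m - 1) * 1)) (at z)"
    by (intro derivative_eq_intros) auto
  then show ?thesis by (simp add: ff_Suc mult_ac)
qed

lemma poly_higher:
  assumes "finite K"
  shows "(deriv ^^ m) (\<lambda>z. \<Sum>k\<in>K. c k * (z+a)^(e k)) = (\<lambda>z. \<Sum>k\<in>K. c k * ff (e k) m * (z+a)^(e k - m))"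
proof (induction m)
  case 0 then show ?case by simp
next
  case (Suc m)
  show ?case
  proof
    fix z
    have "((\<lambda>z. \<Sum>k\<in>K. c k * ff (e k) m * (z+a)^(e k - m)) has_field_derivative
           (\<Sum>k\<in>K. c k * ff (e k) (Suc m) * (z+a)^(e k - Suc m))) (at z)"
      by (intro DERIV_sum deriv_term)
    then show "(deriv ^^ Suc m) (\<lambda>z. \<Sum>k\<in>K. c k * (z+a)^(e k)) z = (\<Sum>k\<in>K. c k * ff (e k) (Suc m) * (z+a)^(e k - Suc m))"
      using Suc by (simp add: DERIV_imp_deriv)
  qed
qed
definition E :: "nat \<Rightarrow> nat \<Rightarrow> complex \<Rightarrow> complex" where
  "E j m w = (if m \<le> j then ff j m * w^(j-m) * (Ln w + harm j - harm (j-m))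
              else (-1)^(m-j-1) * fact j * fact (m-j-1) / w^(m-j))"

lemma alg1:
  fixes w c F L h hq :: complex
  assumes "w \<noteq> 0" "c \<noteq> 0"
  shows "F * c * w^q * (L + h - hq) = F * (c * w^q * 1) * (L + h - (hq + inverse c)) + F * (w * w^q) * (inverse w * 1 + 0 - 0)"
  using assms by (simp add: field_simps)

lemma E_deriv:
  assumes "z + a \<notin> \<real>\<^sub>\<le>\<^sub>0"
  shows "((\<lambda>z. E j m (z+a)) has_field_derivative E j (Suc m) (z+a)) (at z)"
proof -
  have w0: "z + a \<noteq> 0" using assms by auto
  have dL: "((\<lambda>z. Ln (z+a)) has_field_derivative inverse (z+a) * 1) (at z)"
  proof -
    have d0: "((\<lambda>z. z + a) has_field_derivative 1) (at z)"
      using DERIV_add[OF DERIV_ident DERIV_const, of a z UNIV] by simp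
    show ?thesis using DERIV_chain2[OF has_field_derivative_Ln[OF assms] d0] by simp
  qed
  consider "m < j" | "m = j" | "j < m" by linarith
  then show ?thesis
  proof cases
    case 1
    then obtain q where q: "j = m + Suc q" using less_iff_Suc_add by auto
    have "((\<lambda>z. ff j m * (z+a)^(Suc q) * (Ln (z+a) + harm j - harm (Suc q))) has_field_derivative
       ff j m * (of_nat (Suc q) * (z+a)^q * 1) * (Ln (z+a) + harm j - harm (Suc q)) + ff j m * (z+a)^(Suc q) * (inverse (z+a) * 1 + 0 - 0)) (at z)"
      using assms by (intro derivative_eq_intros dL) auto
    moreover have "(\<lambda>z. E j m (z+a)) = (\<lambda>z. ff j m * (z+a)^(Suc q) * (Ln (z+a) + harm j - harm (Suc q)))"
      using q by (auto simp: E_def)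
    moreover have "E j (Suc m) (z+a) = ff j m * (of_nat (Suc q) * (z+a)^q * 1) * (Ln (z+a) + harm j - harm (Suc q)) + ff j m * (z+a)^(Suc q) * (inverse (z+a) * 1 + 0 - 0)"
    proof -
      have e1: "E j (Suc m) (z+a) = ff j m * of_nat (Suc q) * (z+a)^q * (Ln (z+a) + harm j - harm q)"
        using q by (simp add: E_def ff_Suc)
      have e2: "(z+a)^(Suc q) * inverse (z+a) = (z+a)^q" using w0 by (simp add: field_simps)
      have e3: "of_nat (Suc q) * inverse (of_nat (Suc q)) = (1::complex)" by (simp del: of_nat_Suc)
      show ?thesis unfolding e1 harm_Suc
        using alg1[OF w0, of "of_nat (Suc q)"] by (simp del: of_nat_Suc)
    qed
    ultimately show ?thesis by simp
  next
    case 2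
    have "((\<lambda>z. ff j j * (Ln (z+a) + harm j - harm 0)) has_field_derivative
       ff j j * (inverse (z+a) * 1 + 0 - 0)) (at z)"
      using assms by (intro derivative_eq_intros dL) auto
    moreover have "(\<lambda>z. E j m (z+a)) = (\<lambda>z. ff j j * (Ln (z+a) + harm j - harm 0))"
      using 2 by (auto simp: E_def)
    moreover have "E j (Suc m) (z+a) = ff j j * (inverse (z+a) * 1 + 0 - 0)"
      using 2 by (simp add: E_def ff_fact divide_inverse)
    ultimately show ?thesis by simp
  next
    case 3
    then obtain q where q: "m = j + Suc q" using less_iff_Suc_add by auto
    define K :: complex where "K = (-1)^q * fact j * fact q"
    have "((\<lambda>z. K / (z+a)^(Suc q)) has_field_derivative
        - (K * (of_nat (Suc q) * (z+a)^q * 1)) / ((z+a)^(Suc q) * (z+a)^(Suc q))) (at z)"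
      using w0 by (intro derivative_eq_intros) auto
    moreover have "(\<lambda>z. E j m (z+a)) = (\<lambda>z. K / (z+a)^(Suc q))"
      using q by (auto simp: E_def K_def)
    moreover have "E j (Suc m) (z+a) = - (K * (of_nat (Suc q) * (z+a)^q * 1)) / ((z+a)^(Suc q) * (z+a)^(Suc q))"
    proof -
      have e1: "E j (Suc m) (z+a) = (-1)^(Suc q) * fact j * fact (Suc q) / (z+a)^(Suc (Suc q))"
        using q by (simp add: E_def)
      have e2: "(z+a)^(Suc q) * (z+a)^(Suc q) = (z+a)^(Suc (Suc q)) * (z+a)^q"
        by (simp add: algebra_simps)
      have wq: "(z+a)^q \<noteq> 0" using w0 by simp
      show ?thesis unfolding e1 e2 K_def
        using wq by (simp add: divide_simps del: of_nat_Suc)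
    qed
    ultimately show ?thesis by simp
  qed
qed

lemma E_0: "E j 0 w = w^j * Ln w" by (simp add: E_def)

lemma log_higher:
  assumes "open S" "\<And>z. z \<in> S \<Longrightarrow> z + a \<notin> \<real>\<^sub>\<le>\<^sub>0" "finite J"
  shows "\<forall>z\<in>S. (deriv ^^ m) (\<lambda>z. \<Sum>j\<in>J. b j * ((z+a)^j * Ln (z+a))) z = (\<Sum>j\<in>J. b j * E j m (z+a))"
proof (induction m)
  case 0 then show ?case by (simp add: E_0)
next
  case (Suc m)
  show ?case
  proof
    fix z assume z: "z \<in> S"
    have "((\<lambda>z. \<Sum>j\<in>J. b j * E j m (z+a)) has_field_derivative (\<Sum>j\<in>J. b j * E j (Suc m) (z+a))) (at z)"
      by (intro DERIV_sum DERIV_cmult E_deriv assms(2) z)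
    then have "((deriv ^^ m) (\<lambda>z. \<Sum>j\<in>J. b j * ((z+a)^j * Ln (z+a))) has_field_derivative (\<Sum>j\<in>J. b j * E j (Suc m) (z+a))) (at z)"
      by (rule has_field_derivative_transform_within_open[OF _ assms(1) z]) (use Suc in auto)
    then show "(deriv ^^ Suc m) (\<lambda>z. \<Sum>j\<in>J. b j * ((z+a)^j * Ln (z+a))) z = (\<Sum>j\<in>J. b j * E j (Suc m) (z+a))"
      by (simp add: DERIV_imp_deriv)
  qed
qed

lemma poch_alg:
  fixes X Y F G c p :: complex
  assumes "c + 1 \<noteq> 0" "Y \<noteq> 0" "F \<noteq> 0" "p \<noteq> 0"
  shows "X * G / (p * Y * F) * (c + 1/2) = X * (2*c + 1) * (2*c + 2) * G / (4 * p * (Y * (c + 1)) * F)"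
proof -
  have "(2*c + 1) * (2*c + 2) = (c + 1/2) * (4 * (c + 1))" by (simp add: algebra_simps)
  then have "X * (2*c + 1) * (2*c + 2) * G / (4 * p * (Y * (c + 1)) * F)
      = (X * G / (p * Y * F)) * (c + 1/2) * ((4 * (c+1)) / (4 * (c+1)))"
    by (simp add: mult_ac)
  also have "(4 * (c+1)) / (4 * (c+1)) = 1" using assms(1) by (metis divide_self mult_eq_0_iff zero_neq_numeral)
  finally show ?thesis by simp
qed

lemma poch_half: "pochhammer (of_nat m + 1/2 :: complex) s = fact (2*(m+s)) * fact m / (4^s * fact (m+s) * fact (2*m))"
proof (induction s)
  case 0 then show ?case by simp
next
  case (Suc s)
  have e1: "2*(m + Suc s) = Suc (Suc (2*(m+s)))" by simp
  have f1: "(fact (2*(m + Suc s)) :: complex) = fact (2*(m+s)) * (2*(of_nat m + of_nat s) + 1) * (2*(of_nat m + of_nat s) + 2)"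
    unfolding e1 by (simp add: fact_Suc algebra_simps)
  have f2: "(fact (m + Suc s) :: complex) = fact (m+s) * ((of_nat m + of_nat s) + 1)"
    by (simp add: fact_Suc algebra_simps)
  have nz: "((of_nat m + of_nat s) + 1 :: complex) \<noteq> 0"
    by (metis of_nat_Suc of_nat_eq_0_iff of_nat_add add.commute nat.simps(3))
  have "pochhammer (of_nat m + 1/2 :: complex) (Suc s) = fact (2*(m+s)) * fact m / (4^s * fact (m+s) * fact (2*m)) * ((of_nat m + of_nat s) + 1/2)"
    by (simp add: pochhammer_Suc Suc algebra_simps)
  also have "\<dots> = fact (2*(m+s)) * (2*(of_nat m + of_nat s) + 1) * (2*(of_nat m + of_nat s) + 2) * fact m / (4 * 4^s * (fact (m+s) * ((of_nat m + of_nat s) + 1)) * fact (2*m))"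
    by (rule poch_alg[OF nz]) auto
  also have "\<dots> = fact (2*(m + Suc s)) * fact m / (4^(Suc s) * fact (m + Suc s) * fact (2*m))"
    unfolding f1 f2 by simp
  finally show ?case .
qed

lemma geg_term:
  fixes z :: complex
  assumes "n = m + r + 2*k"
  shows "fact (2*m) / (2^m * fact m) * ((-1)^k * pochhammer (of_nat m + 1/2) (n - m - k) / (fact k * fact (n - m - 2*k)) * (2*z)^(n - m - 2*k))
    = ((-1)^k * of_nat (n choose k) * of_nat ((2*n-2*k) choose n) / 2^n) * ff (n-2*k) m * z^(n-2*k-m)"
proof -
  have i1: "n - m - k = r + k" "n - m - 2*k = r" "n - 2*k = m + r" "n - 2*k - m = r" "2*n - 2*k = 2*(m+r+k)"
    using assms by auto
  have b1: "(of_nat (n choose k) :: complex) = fact n / (fact k * fact (m+r+k))"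
    using assms by (subst binomial_fact) (auto simp: algebra_simps)
  have b2: "(of_nat ((2*(m+r+k)) choose n) :: complex) = fact (2*(m+r+k)) / (fact n * fact (m+r))"
    using assms by (subst binomial_fact) (auto simp: algebra_simps)
  have f1: "ff (m+r) m = fact (m+r) / fact r" by (subst ff_fact) auto
  have p1: "(2::complex)^n = 2^m * 2^r * 4^k"
    using assms by (simp add: power_add power_mult)
  have p2: "(4::complex)^(r+k) = 2^r * 2^r * 4^k"
    by (simp add: power_add flip: power_mult_distrib)
  have a1: "m + (r + k) = m + r + k" by simp
  show ?thesis
    unfolding i1 b1 b2 f1 poch_half p1 p2 a1 power_mult_distrib
    by (simp add: field_simps)
qed

lemma geg:
  fixes z :: complex
  assumes "m \<le> n"
  shows "fact (2*m) / (2^m * fact m) * gegenbauerC (n - m) (of_nat m + 1/2) z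
    = (\<Sum>k\<le>n div 2. ((-1)^k * of_nat (n choose k) * of_nat ((2*n-2*k) choose n) / 2^n) * ff (n-2*k) m * z^(n-2*k-m))"
proof -
  have "(\<Sum>k\<le>n div 2. ((-1)^k * of_nat (n choose k) * of_nat ((2*n-2*k) choose n) / 2^n) * ff (n-2*k) m * z^(n-2*k-m))
    = (\<Sum>k\<le>(n-m) div 2. fact (2*m) / (2^m * fact m) * ((-1)^k * pochhammer (of_nat m + 1/2) (n - m - k) / (fact k * fact (n - m - 2*k)) * (2*z)^(n - m - 2*k)))"
  proof (rule sum.mono_neutral_cong_right)
    show "\<forall>i\<in>{..n div 2} - {..(n - m) div 2}. ((-1)^i * of_nat (n choose i) * of_nat ((2*n-2*i) choose n) / 2^n) * ff (n-2*i) m * z^(n-2*i-m) = 0"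
    proof
      fix i assume "i \<in> {..n div 2} - {..(n - m) div 2}"
      then have "n - 2*i < m" by auto
      then show "((-1)^i * of_nat (n choose i) * of_nat ((2*n-2*i) choose n) / 2^n) * ff (n-2*i) m * z^(n-2*i-m) = 0"
        by (simp add: ff_zero)
    qed
  next
    fix k assume "k \<in> {..(n - m) div 2}"
    then have "2*k \<le> n - m" by auto
    then have "n = m + (n - m - 2*k) + 2*k" using assms by arith
    from geg_term[OF this] show "((-1)^k * of_nat (n choose k) * of_nat ((2*n-2*k) choose n) / 2^n) * ff (n-2*k) m * z^(n-2*k-m)
       = fact (2*m) / (2^m * fact m) * ((-1)^k * pochhammer (of_nat m + 1/2) (n - m - k) / (fact k * fact (n - m - 2*k)) * (2*z)^(n - m - 2*k))"
      by simp
  qed auto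
  then show ?thesis by (simp add: gegenbauerC_def sum_distrib_left)
qed

definition bb :: "complex \<Rightarrow> nat \<Rightarrow> nat \<Rightarrow> complex" where
  "bb \<epsilon> n j = (-\<epsilon>)^(n-j) * fact (n+j) / (2^j * fact j * fact j * fact (n-j))"

lemma R1: "legendreP n z = (\<Sum>k\<le>n. ((-1)^k * of_nat (n choose k)) * ff (2*n-2*k) n * (z+0)^(2*n-2*k-n)) / (2^n * fact n)"
proof -
  have "(\<Sum>k\<le>n. ((-1)^k * of_nat (n choose k)) * ff (2*n-2*k) n * (z+0)^(2*n-2*k-n)) / (2^n * fact n)
     = (\<Sum>k\<le>n. ((-1)^k * of_nat (n choose k)) * ff (2*n-2*k) n * (z+0)^(2*n-2*k-n) / (2^n * fact n))"
    by (simp add: sum_divide_distrib)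
  also have "\<dots> = (\<Sum>k\<le>n div 2. (-1)^k * of_nat (n choose k) * of_nat ((2*n - 2*k) choose n) * z ^ (n - 2*k) / 2 ^ n)"
  proof (rule sum.mono_neutral_cong_right)
    show "\<forall>i\<in>{..n} - {..n div 2}. ((-1)^i * of_nat (n choose i)) * ff (2*n-2*i) n * (z+0)^(2*n-2*i-n) / (2^n * fact n) = 0"
      by (auto simp: ff_zero)
  next
    fix k assume "k \<in> {..n div 2}"
    then have k: "2*k \<le> n" by auto
    have i1: "2*n-2*k-n = n - 2*k" "2*n - 2*k - n = n - 2*k" by auto
    have f: "ff (2*n-2*k) n = fact (2*n-2*k) / fact (n-2*k)" using k by (subst ff_fact) (auto simp: i1)
    have b: "(of_nat ((2*n-2*k) choose n) :: complex) = fact (2*n-2*k) / (fact n * fact (n - 2*k))"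
      using k by (subst binomial_fact) (auto simp: i1)
    show "((-1)^k * of_nat (n choose k)) * ff (2*n-2*k) n * (z+0)^(2*n-2*k-n) / (2^n * fact n)
       = (-1)^k * of_nat (n choose k) * of_nat ((2*n - 2*k) choose n) * z ^ (n - 2*k) / 2 ^ n"
      unfolding f b i1 by (simp add: field_simps)
  qed auto
  also have "\<dots> = legendreP n z" by (simp add: legendreP_def sum_divide_distrib)
  finally show ?thesis by simp
qed

lemma R3:
  fixes \<epsilon> :: complex
  assumes "\<epsilon>^2 = 1"
  shows "(\<lambda>z. \<Sum>k\<le>n. ((-1)^k * of_nat (n choose k)) * (z+0)^(2*n-2*k)) = (\<lambda>z. \<Sum>j\<le>n. (of_nat (n choose j) * (-2*\<epsilon>)^(n-j)) * (z+\<epsilon>)^(n+j))"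
proof
  fix z :: complex
  have "(\<Sum>k\<le>n. ((-1)^k * of_nat (n choose k)) * (z+0)^(2*n-2*k)) = (\<Sum>k\<le>n. of_nat (n choose k) * (-1)^k * (z^2)^(n-k))"
  proof (intro sum.cong refl)
    fix k assume "k \<in> {..n}"
    have "2*n-2*k = 2*(n-k)" by auto
    then show "((-1)^k * of_nat (n choose k)) * (z+0)^(2*n-2*k) = of_nat (n choose k) * (-1)^k * (z^2)^(n-k)"
      by (simp add: power_mult mult_ac flip: power_mult_distrib) (metis power_mult mult.commute)
  qed
  also have "\<dots> = (-1 + z^2)^n" by (rule binomial_ring[symmetric])
  also have "-1 + z^2 = (z+\<epsilon>) * ((z+\<epsilon>) + (-2*\<epsilon>))" using assms by (simp add: algebra_simps power2_eq_square)
  also have "((z+\<epsilon>) * ((z+\<epsilon>) + (-2*\<epsilon>)))^n = (z+\<epsilon>)^n * (\<Sum>j\<le>n. of_nat (n choose j) * (z+\<epsilon>)^j * (-2*\<epsilon>)^(n-j))"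
    by (simp only: power_mult_distrib binomial_ring[of "z+\<epsilon>" "-2*\<epsilon>" n])
  also have "\<dots> = (\<Sum>j\<le>n. (of_nat (n choose j) * (-2*\<epsilon>)^(n-j)) * (z+\<epsilon>)^(n+j))"
    by (simp add: sum_distrib_left power_add mult_ac)
  finally show "(\<Sum>k\<le>n. ((-1)^k * of_nat (n choose k)) * (z+0)^(2*n-2*k)) = (\<Sum>j\<le>n. (of_nat (n choose j) * (-2*\<epsilon>)^(n-j)) * (z+\<epsilon>)^(n+j))" .
qed

lemma legendre_w:
  fixes \<epsilon> :: complex
  assumes "\<epsilon>^2 = 1"
  shows "legendreP n z = (\<Sum>j\<le>n. bb \<epsilon> n j * (z+\<epsilon>)^j)"
proof -
  have "legendreP n z = (deriv ^^ n) (\<lambda>z. \<Sum>k\<le>n. ((-1)^k * of_nat (n choose k)) * (z+0)^(2*n-2*k)) z / (2^n * fact n)"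
    unfolding R1 by (simp only: poly_higher[OF finite_atMost])
  also have "\<dots> = (\<Sum>j\<le>n. (of_nat (n choose j) * (-2*\<epsilon>)^(n-j)) * ff (n+j) n * (z+\<epsilon>)^(n+j-n)) / (2^n * fact n)"
    unfolding R3[OF assms] by (simp only: poly_higher[OF finite_atMost])
  also have "\<dots> = (\<Sum>j\<le>n. bb \<epsilon> n j * (z+\<epsilon>)^j)"
    unfolding sum_divide_distrib
  proof (intro sum.cong refl)
    fix j assume "j \<in> {..n}"
    then have j: "j \<le> n" by simp
    have f: "ff (n+j) n = fact (n+j) / fact j" by (subst ff_fact) auto
    have b: "(of_nat (n choose j) :: complex) = fact n / (fact j * fact (n-j))" using j by (rule binomial_fact)
    have p: "(2::complex)^n = 2^j * 2^(n-j)" using j by (simp flip: power_add)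
    have q: "(-2*\<epsilon>)^(n-j) = (-\<epsilon>)^(n-j) * 2^(n-j)"
      by (metis mult.commute mult_minus_left power_mult_distrib)
    have r: "n + j - n = j" by simp
    show "(of_nat (n choose j) * (-2*\<epsilon>)^(n-j)) * ff (n+j) n * (z+\<epsilon>)^(n+j-n) / (2^n * fact n) = bb \<epsilon> n j * (z+\<epsilon>)^j"
      unfolding f b p q r bb_def by (simp add: field_simps)
  qed
  finally show ?thesis .
qed

lemma pow_sub: "(x::complex)^2 = 1 \<Longrightarrow> j \<le> n \<Longrightarrow> x^(n-j) = x^n * x^j"
proof -
  assume x: "x^2 = 1" and j: "j \<le> n"
  have "x^n * x^j = x^(n-j) * x^j * x^j" using j by (simp flip: power_add)
  also have "\<dots> = x^(n-j) * (x^2)^j" by (simp add: power2_eq_square power_mult_distrib mult.assoc)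
  finally show ?thesis using x by simp
qed

theorem mainTheorem4:
  fixes m n :: nat and \<epsilon> z :: complex
  assumes "m \<le> n"
    and "\<epsilon> = 1 \<or> \<epsilon> = -1"
    and "\<not> (Im z = 0 \<and> Re z \<le> 1)"
  shows "(deriv ^^ m) (\<lambda>w. legendreP n w * Ln (w + \<epsilon>)) z =
     fact (2*m) / (2^m * fact m) * gegenbauerC (n - m) (of_nat m + 1/2) z * Ln (z + \<epsilon>)
     - (-\<epsilon>)^n * (-1)^m * inverse ((z + \<epsilon>)^m) *
        (\<Sum>k<m. \<epsilon>^k * (fact (k + n) * fact (m - k - 1)) / (fact k * fact (n - k))
                  * ((z + \<epsilon>) / 2)^k)
     + (-\<epsilon>)^(n + m) / 2^m *
        (\<Sum>k\<le>n - m. (-\<epsilon>)^k * fact (k + n + m) / (fact k * fact (k + m) * fact (n - m - k))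
                  * (Digamma (of_nat (k + m + 1)) - Digamma (of_nat (k + 1)))
                  * ((z + \<epsilon>) / 2)^k)"
proof -
  have eps2: "\<epsilon>^2 = 1" using assms(2) by auto
  have meps2: "(-\<epsilon>)^2 = 1" using eps2 by simp
  define S where "S = {u::complex. \<not> (Im u = 0 \<and> Re u \<le> 1)}"
  have "S = {u. 0 < Im u} \<union> {u. Im u < 0} \<union> {u. 1 < Re u}" by (auto simp: S_def)
  then have openS: "open S"
    by (simp add: open_Un open_halfspace_Im_gt open_halfspace_Im_lt open_halfspace_Re_gt)
  have slit: "\<And>u. u \<in> S \<Longrightarrow> u + \<epsilon> \<notin> \<real>\<^sub>\<le>\<^sub>0"
    using assms(2) by (auto simp: S_def complex_nonpos_Reals_iff)
  have zS: "z \<in> S" using assms(3) by (simp add: S_def)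
  define w where "w = z + \<epsilon>"
  have w0: "w \<noteq> 0" using slit[OF zS] by (auto simp: w_def)
  have fun_eq: "(\<lambda>w. legendreP n w * Ln (w+\<epsilon>)) = (\<lambda>w. \<Sum>j\<le>n. bb \<epsilon> n j * ((w+\<epsilon>)^j * Ln (w+\<epsilon>)))"
    by (simp add: legendre_w[OF eps2] sum_distrib_right mult.assoc)
  have LHS: "(deriv ^^ m) (\<lambda>w. legendreP n w * Ln (w+\<epsilon>)) z = (\<Sum>j\<le>n. bb \<epsilon> n j * E j m w)"
    using log_higher[OF openS slit finite_atMost] zS unfolding fun_eq w_def by blast
  have split: "{..n} = {..<m} \<union> {m..n}" using assms(1) by auto
  have LHS2: "(\<Sum>j\<le>n. bb \<epsilon> n j * E j m w) = (\<Sum>j<m. bb \<epsilon> n j * E j m w) + (\<Sum>j\<in>{m..n}. bb \<epsilon> n j * E j m w)"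
    unfolding split by (rule sum.union_disjoint) auto
  have partB: "(\<Sum>j\<in>{m..n}. bb \<epsilon> n j * E j m w) = (\<Sum>j\<in>{m..n}. bb \<epsilon> n j * ff j m * w^(j-m)) * Ln w
      + (\<Sum>j\<in>{m..n}. bb \<epsilon> n j * ff j m * w^(j-m) * (harm j - harm (j-m)))"
    by (simp add: E_def sum_distrib_right flip: sum.distrib) (simp add: algebra_simps)
  have Cw: "(\<Sum>j\<in>{m..n}. bb \<epsilon> n j * ff j m * w^(j-m)) = fact (2*m) / (2^m * fact m) * gegenbauerC (n - m) (of_nat m + 1/2) z"
  proof -
    have "(\<Sum>j\<in>{m..n}. bb \<epsilon> n j * ff j m * w^(j-m)) = (\<Sum>j\<le>n. bb \<epsilon> n j * ff j m * (z+\<epsilon>)^(j-m))"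
      by (rule sum.mono_neutral_cong_left) (auto simp: ff_zero w_def)
    also have "\<dots> = (deriv ^^ m) (\<lambda>z. \<Sum>j\<le>n. bb \<epsilon> n j * (z+\<epsilon>)^j) z"
      using poly_higher[OF finite_atMost, of m "bb \<epsilon> n" \<epsilon> "\<lambda>j. j" n] by simp
    also have "(\<lambda>z. \<Sum>j\<le>n. bb \<epsilon> n j * (z+\<epsilon>)^j) = (\<lambda>z. \<Sum>k\<le>n div 2. ((-1)^k * of_nat (n choose k) * of_nat ((2*n-2*k) choose n) / 2^n) * (z+0)^(n-2*k))"
      by (rule ext) (simp add: legendre_w[OF eps2, symmetric] legendreP_def sum_divide_distrib)
    also have "(deriv ^^ m) \<dots> z = (\<Sum>k\<le>n div 2. ((-1)^k * of_nat (n choose k) * of_nat ((2*n-2*k) choose n) / 2^n) * ff (n-2*k) m * z^(n-2*k-m))"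
      using poly_higher[OF finite_atMost, of m "\<lambda>k. (-1)^k * of_nat (n choose k) * of_nat ((2*n-2*k) choose n) / 2^n" 0 "\<lambda>k. n-2*k" "n div 2"]
      by simp
    also have "\<dots> = fact (2*m) / (2^m * fact m) * gegenbauerC (n - m) (of_nat m + 1/2) z"
      by (rule geg[OF assms(1), symmetric])
    finally show ?thesis .
  qed
  have partH: "(\<Sum>j\<in>{m..n}. bb \<epsilon> n j * ff j m * w^(j-m) * (harm j - harm (j-m))) =
      (-\<epsilon>)^(n + m) / 2^m *
        (\<Sum>k\<le>n - m. (-\<epsilon>)^k * fact (k + n + m) / (fact k * fact (k + m) * fact (n - m - k))
                  * (Digamma (of_nat (k + m + 1)) - Digamma (of_nat (k + 1)))
                  * (w / 2)^k)"
  proof -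
    have "(\<Sum>j\<in>{m..n}. bb \<epsilon> n j * ff j m * w^(j-m) * (harm j - harm (j-m))) =
      (\<Sum>k\<le>n-m. bb \<epsilon> n (m+k) * ff (m+k) m * w^(m+k-m) * (harm (m+k) - harm (m+k-m)))"
      by (simp add: sum.atLeastAtMost_shift_0[OF assms(1)] atLeast0AtMost)
    also have "\<dots> = (\<Sum>k\<le>n - m. (-\<epsilon>)^(n + m) / 2^m * ((-\<epsilon>)^k * fact (k + n + m) / (fact k * fact (k + m) * fact (n - m - k))
                  * (Digamma (of_nat (k + m + 1)) - Digamma (of_nat (k + 1)))
                  * (w / 2)^k))"
    proof (rule sum.cong[OF refl])
      fix k assume "k \<in> {..n-m}"
      then have k: "m + k \<le> n" using assms(1) by auto
      have d1: "Digamma (of_nat (k+m+1)) = (harm (k+m) :: complex) - euler_mascheroni"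
        by (metis Digamma_of_nat Suc_eq_plus1)
      have d2: "Digamma (of_nat (k+1)) = (harm k :: complex) - euler_mascheroni"
        by (metis Digamma_of_nat Suc_eq_plus1)
      have s1: "(-\<epsilon>)^(n-(m+k)) = (-\<epsilon>)^n * (-\<epsilon>)^m * (-\<epsilon>)^k"
        using pow_sub[OF meps2 k] by (simp add: power_add mult.assoc)
      have f1: "ff (m+k) m = fact (m+k) / fact k" by (subst ff_fact) auto
      have e1: "m + k - m = k" "n - (m + k) = n - m - k" "n + (m+k) = k + n + m" "m + k = k + m" by auto
      show "bb \<epsilon> n (m+k) * ff (m+k) m * w^(m+k-m) * (harm (m+k) - harm (m+k-m)) =
         (-\<epsilon>)^(n + m) / 2^m * ((-\<epsilon>)^k * fact (k + n + m) / (fact k * fact (k + m) * fact (n - m - k))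
                  * (Digamma (of_nat (k + m + 1)) - Digamma (of_nat (k + 1)))
                  * (w / 2)^k)"
        unfolding d1 d2 unfolding bb_def s1 f1 unfolding e1
        by (simp add: field_simps power_add power_divide)
    qed
    also have "\<dots> = (-\<epsilon>)^(n + m) / 2^m *
        (\<Sum>k\<le>n - m. (-\<epsilon>)^k * fact (k + n + m) / (fact k * fact (k + m) * fact (n - m - k))
                  * (Digamma (of_nat (k + m + 1)) - Digamma (of_nat (k + 1)))
                  * (w / 2)^k)"
      by (simp add: sum_distrib_left)
    finally show ?thesis .
  qed
  have partA: "(\<Sum>j<m. bb \<epsilon> n j * E j m w) = - ((-\<epsilon>)^n * (-1)^m * inverse (w^m) *
        (\<Sum>k<m. \<epsilon>^k * (fact (k + n) * fact (m - k - 1)) / (fact k * fact (n - k)) * (w / 2)^k))"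
  proof -
    have "(\<Sum>j<m. bb \<epsilon> n j * E j m w) = (\<Sum>k<m. - ((-\<epsilon>)^n * (-1)^m * inverse (w^m) *
        (\<epsilon>^k * (fact (k + n) * fact (m - k - 1)) / (fact k * fact (n - k)) * (w / 2)^k)))"
    proof (rule sum.cong[OF refl])
      fix j assume "j \<in> {..<m}"
      then have jm: "j < m" by simp
      then have jn: "j \<le> n" using assms(1) by simp
      have t1: "bb \<epsilon> n j * E j m w = ((-\<epsilon>)^(n-j) * (-1)^(m - Suc j)) * (fact (n+j) * fact (m - Suc j) / (2^j * fact j * fact (n-j))) * (1 / w^(m-j))"
        using jm by (simp add: bb_def E_def field_simps)
      have sg: "(-\<epsilon>)^(n-j) * (-1)^(m - Suc j) = - ((-\<epsilon>)^n * (-1)^m * \<epsilon>^j)"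
      proof -
        have a: "(-\<epsilon>)^(n-j) = (-\<epsilon>)^n * (-\<epsilon>)^j" by (rule pow_sub[OF meps2 jn])
        have b: "(-1::complex)^(m - Suc j) = (-1)^m * (-1)^(Suc j)" by (rule pow_sub) (use jm in auto)
        have c0: "(-1::complex)^j * (-1)^j = 1" by (simp flip: power_mult_distrib)
        have c: "(-\<epsilon>)^j * (-1)^(Suc j) = -(\<epsilon>^j)"
          unfolding power_minus[of \<epsilon> j] using c0 by (simp add: algebra_simps)
        show ?thesis unfolding a b using c by (simp add: algebra_simps)
      qed
      have wm: "w^m = w^j * w^(m-j)" using jm by (simp flip: power_add)
      have e: "n + j = j + n" "m - Suc j = m - j - 1" by auto
      show "bb \<epsilon> n j * E j m w = - ((-\<epsilon>)^n * (-1)^m * inverse (w^m) *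
        (\<epsilon>^j * (fact (j + n) * fact (m - j - 1)) / (fact j * fact (n - j)) * (w / 2)^j))"
        unfolding t1 sg wm unfolding e using w0 by (simp add: field_simps power_divide)
    qed
    also have "\<dots> = - ((-\<epsilon>)^n * (-1)^m * inverse (w^m) *
        (\<Sum>k<m. \<epsilon>^k * (fact (k + n) * fact (m - k - 1)) / (fact k * fact (n - k)) * (w / 2)^k))"
      by (simp add: sum_distrib_left sum_negf)
    finally show ?thesis .
  qed
  show ?thesis
    unfolding LHS LHS2 partB Cw partH partA by (simp add: w_def)
qed
end
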